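(* Let $F$ be a face of $\delta\mathcal{A}_{\bm o}$ and let $\bm a,\bm b\in\operatorname{relint}(F)$. Then (i) the parallel translations $\mathcal{A}_{\bm a}$ and $\mathcal{A}_{\bm b}$ are normally equivalent and combinatorially equivalent; (ii) the conings $c\mathcal{A}_{\bm a}$ and $c\mathcal{A}_{\bm b}$ are combinatorially equivalent; (iii) the elementary lifts $\mathcal{A}^{\bm a}$ and $\mathcal{A}^{\bm b}$ are combinatorially equivalent.
   Context: Fix nonzero vectors $\bm u_1,\dots,\bm u_m\in\mathbb{R}^n$ (repetitions and parallel vectors allowed). Derived arrangement: a circuit is a subset $C\subseteq[m]$ such that the indexed family $\{\bm u_i: i\in C\}$ is a minimal linearly dependent family; for each circuit fix $\bm c^C\in\mathbb{R}^m$ with $\sum_i c_i\bm u_i=\bm 0$ and $c_i\ne 0\iff i\in C$. The derived arrangement $\delta\mathcal{A}_{\bm o}$ is the arrangement in $\mathbb{R}^m$ of hyperplanes $\langle\bm c^C,\bm y\rangle=0$ over all circuits $C$; its open faces are the nonempty sets $\{\bm y:\operatorname{sign}\langle\bm c^C,\bm y\rangle=\epsilon_C\ \forall C\}$ for fixed signs $\epsilon_C$, its faces are their closures, and $\operatorname{relint}(F)$ is the open face with closure $F$. Arrangements: for $\bm a\in\mathbb{R}^m$, the parallel translation $\mathcal{A}_{\bm a}$ is the indexed family of affine hyperplanes $H_i=\{\bm x\in\mathbb{R}^n:\langle\bm u_i,\bm x\rangle=a_i\}$, $i=1,\dots,m$; the coning $c\mathcal{A}_{\bm a}$ is the family in $\mathbb{R}^{n+1}$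 of the $m+1$ linear hyperplanes $\{(\bm x,x_{n+1}):\langle\bm u_i,\bm x\rangle+a_ix_{n+1}=0\}$, $i=1,\dots,m$, together with $K_0=\{x_{n+1}=0\}$; the elementary lift $\mathcal{A}^{\bm a}$ is the family in $\mathbb{R}^{n+1}$ of the $m$ hyperplanes $\{\langle\bm u_i,\bm x\rangle+a_ix_{n+1}=0\}$, $i=1,\dots,m$. For an arrangement $\mathcal{A}$ of finitely many affine hyperplanes $\{\bm z:\langle\bm w_i,\bm z\rangle=d_i\}$, the open faces are the nonempty subsets of points having the same sign vector $(\operatorname{sign}(\langle\bm w_i,\bm z\rangle-d_i))_i$, the faces are their closures, and the face poset $\mathcal{F}(\mathcal{A})$ is the set of faces ordered by inclusion. Two arrangements are combinatorially equivalent if their face posets are isomorphic. For a nonempty convex polyhedron $P$, $h_P(\bm u)=\sup_{\bm x\in P}\langle\bm u,\bm x\rangle$, $N_P(\bm x)=\{\bm u:\langle\bm u,\bm x\rangle=h_P(\bm u)\}$ for $\bm x\in P$, $N_P(G)=N_P(\bm x)$ for $\bm x\in\operatorname{relint}(G)$, and the normal fan $\mathcal{N}(P)$ is the set of all $N_P(G)$, $G$ a nonempty face; $P,Q$ are normally equivalent if $\mathcal{N}(P)=\mathcal{N}(Q)$. Two arrangements $\mathcal{A},\mathcal{A}'$ in the same $\mathbb{R}^n$ are normally equivalent if there is an order-preserving bijection $\Psi:\mathcal{F}(\mathcal{A})\to\mathcal{F}(\mathcal{A}')$ such that $F$ and $\Psi(F)$ are normally equivalent for every face $F$. *)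

theory Defs
  imports "HOL-Analysis.Analysis"
begin

text \<open>The configuration u_1,...,u_m in R^n is a map u from a finite index type 'm
  (so m = CARD('m)) to real^'n. An indexed subfamily {u_i : i in C} is linearly
  independent if every vanishing linear combination has zero coefficients
  (repetitions are respected because we work with the indexed family).\<close>

definition indep_family :: "('m \<Rightarrow> 'v::real_vector) \<Rightarrow> 'm set \<Rightarrow> bool" where
  "indep_family u C \<longleftrightarrow> (\<forall>c. (\<Sum>i\<in>C. c i *\<^sub>R u i) = 0 \<longrightarrow> (\<forall>i\<in>C. c i = 0))"

definition circuit :: "('m \<Rightarrow> 'v::real_vector) \<Rightarrow> 'm set \<Rightarrow> bool" where
  "circuit u C \<longleftrightarrow> \<not> indep_family u C \<and> (\<forall>D. D \<subset> C \<longrightarrow> indep_family u D)"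

definition circuit_vectors :: "('m::finite \<Rightarrow> 'v::real_vector) \<Rightarrow> ('m set \<Rightarrow> real^'m) \<Rightarrow> bool" where
  "circuit_vectors u c \<longleftrightarrow>
     (\<forall>C. circuit u C \<longrightarrow> (\<Sum>i\<in>UNIV. (c C $ i) *\<^sub>R u i) = 0 \<and> (\<forall>i. c C $ i \<noteq> 0 \<longleftrightarrow> i \<in> C))"

text \<open>An arrangement is given by an index set I and, for each index i, a pair
  (w_i, d_i) describing the hyperplane <w_i, z> = d_i.\<close>

definition sgnvec :: "'i set \<Rightarrow> ('i \<Rightarrow> 'v::real_inner \<times> real) \<Rightarrow> 'v \<Rightarrow> 'i \<Rightarrow> real" where
  "sgnvec I H z = (\<lambda>i. if i \<in> I then sgn (inner (fst (H i)) z - snd (H i)) else 0)"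

definition arr_open_faces :: "'i set \<Rightarrow> ('i \<Rightarrow> 'v::real_inner \<times> real) \<Rightarrow> 'v set set" where
  "arr_open_faces I H = {{y. sgnvec I H y = sgnvec I H z} | z. True}"

definition arr_faces :: "'i set \<Rightarrow> ('i \<Rightarrow> 'v::real_inner \<times> real) \<Rightarrow> 'v set set" where
  "arr_faces I H = closure ` arr_open_faces I H"

definition comb_equiv ::
  "'i set \<Rightarrow> ('i \<Rightarrow> 'v::real_inner \<times> real) \<Rightarrow> 'j set \<Rightarrow> ('j \<Rightarrow> 'w::real_inner \<times> real) \<Rightarrow> bool" where
  "comb_equiv I H J K \<longleftrightarrow>
     (\<exists>\<Psi>. bij_betw \<Psi> (arr_faces I H) (arr_faces J K) \<and>
          (\<forall>F\<in>arr_faces I H. \<forall>G\<in>arr_faces I H. F \<subseteq> G \<longleftrightarrow> \<Psi> F \<subseteq> \<Psi> G))"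

definition support_fn :: "'v::real_inner set \<Rightarrow> 'v \<Rightarrow> ereal" where
  "support_fn P u = (SUP x\<in>P. ereal (inner u x))"

definition normal_cone_at :: "'v::real_inner set \<Rightarrow> 'v \<Rightarrow> 'v set" where
  "normal_cone_at P x = {u. ereal (inner u x) = support_fn P u}"

text \<open>N_P(G) = N_P(x) for x in relint G; the normal fan collects these for all
  nonempty faces G of P.\<close>

definition normal_fan :: "'v::euclidean_space set \<Rightarrow> 'v set set" where
  "normal_fan P = {normal_cone_at P x | G x. G face_of P \<and> G \<noteq> {} \<and> x \<in> rel_interior G}"

definition normally_equiv_arr ::
  "'i set \<Rightarrow> ('i \<Rightarrow> 'v::euclidean_space \<times> real) \<Rightarrow> 'j set \<Rightarrow> ('j \<Rightarrow> 'v \<times> real) \<Rightarrow> bool" where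
  "normally_equiv_arr I H J K \<longleftrightarrow>
     (\<exists>\<Psi>. bij_betw \<Psi> (arr_faces I H) (arr_faces J K) \<and>
          (\<forall>F\<in>arr_faces I H. \<forall>G\<in>arr_faces I H. F \<subseteq> G \<longrightarrow> \<Psi> F \<subseteq> \<Psi> G) \<and>
          (\<forall>F\<in>arr_faces I H. normal_fan F = normal_fan (\<Psi> F)))"

definition derived_arr :: "('m::finite \<Rightarrow> real^'n) \<Rightarrow> ('m set \<Rightarrow> real^'m) \<Rightarrow> 'm set \<Rightarrow> (real^'m) \<times> real" where
  "derived_arr u c = (\<lambda>C. (c C, 0))"

definition par_trans :: "('m::finite \<Rightarrow> real^'n) \<Rightarrow> real^'m \<Rightarrow> 'm \<Rightarrow> (real^'n) \<times> real" where
  "par_trans u a = (\<lambda>i. (u i, a $ i))"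

text \<open>R^(n+1) is rendered as (real^'n) \<times> real, the last coordinate being x_(n+1).
  Coning: indices Some i give <u_i,x> + a_i x_(n+1) = 0, index None gives K_0.\<close>

definition coning :: "('m::finite \<Rightarrow> real^'n) \<Rightarrow> real^'m \<Rightarrow> 'm option \<Rightarrow> ((real^'n) \<times> real) \<times> real" where
  "coning u a = (\<lambda>j. case j of None \<Rightarrow> ((0, 1), 0) | Some i \<Rightarrow> ((u i, a $ i), 0))"

definition elem_lift :: "('m::finite \<Rightarrow> real^'n) \<Rightarrow> real^'m \<Rightarrow> 'm \<Rightarrow> ((real^'n) \<times> real) \<times> real" where
  "elem_lift u a = (\<lambda>i. ((u i, a $ i), 0))"

end

theory Submission
  imports Defs
begin


definition sv :: "('i \<Rightarrow> 'v::real_inner \<times> real) \<Rightarrow> 'v \<Rightarrow> 'i \<Rightarrow> real" where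
  "sv H y = (\<lambda>i. sgn (fst (H i) \<bullet> y - snd (H i)))"

definition conf :: "('i \<Rightarrow> real) \<Rightarrow> ('i \<Rightarrow> real) \<Rightarrow> bool" where
  "conf \<tau> \<sigma> \<longleftrightarrow> (\<forall>i. \<tau> i = 0 \<or> \<tau> i = \<sigma> i)"

definition cf :: "('i \<Rightarrow> 'v::real_inner \<times> real) \<Rightarrow> ('i \<Rightarrow> real) \<Rightarrow> 'v set" where
  "cf H \<sigma> = {y. conf (sv H y) \<sigma>}"

lemma sgnvec_UNIV: "sgnvec UNIV H = sv H"
  by (auto simp: sgnvec_def sv_def)

lemma sgn_comb:
  fixes p q u :: real
  assumes "0 < u" "u < 1" "sgn q = 0 \<or> sgn q = sgn p"
  shows "sgn ((1-u)*p + u*q) = sgn p"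
proof -
  have u1: "0 < 1 - u" using assms by simp
  consider "p > 0" | "p = 0" | "p < 0" by linarith
  then show ?thesis
  proof cases
    case 1
    then have "q \<ge> 0" using assms(3) by (auto simp: sgn_if split: if_splits)
    then have "(1-u)*p + u*q > 0" using 1 u1 assms(1) by (simp add: add_pos_nonneg)
    then show ?thesis using 1 by simp
  next
    case 2
    then have "q = 0" using assms(3) by (auto simp: sgn_if split: if_splits)
    then show ?thesis using 2 by simp
  next
    case 3
    then have "q \<le> 0" using assms(3) by (auto simp: sgn_if split: if_splits)
    then have "(1-u)*p + u*q < 0" using 3 u1 assms(1)
      by (simp add: add_neg_nonpos mult_pos_neg mult_nonneg_nonpos)
    then show ?thesis using 3 by simp
  qed
qed

lemma closed_sgn_set:
  fixes w :: "'v::real_inner"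
  assumes "s = -1 \<or> s = 0 \<or> s = 1"
  shows "closed {y::'v. sgn (w \<bullet> y - d) = 0 \<or> sgn (w \<bullet> y - d) = s}"
proof -
  have "{y::'v. sgn (w \<bullet> y - d) = 0 \<or> sgn (w \<bullet> y - d) = s} = {y. s * (w \<bullet> y - d) = \<bar>w \<bullet> y - d\<bar>}"
  proof (intro set_eqI iffI; simp)
    fix y
    show "sgn (w \<bullet> y - d) = 0 \<or> sgn (w \<bullet> y - d) = s \<Longrightarrow> s * (w \<bullet> y - d) = \<bar>w \<bullet> y - d\<bar>"
      using assms by (cases "w \<bullet> y - d > 0"; cases "w \<bullet> y - d < 0") auto
    show "s * (w \<bullet> y - d) = \<bar>w \<bullet> y - d\<bar> \<Longrightarrow> sgn (w \<bullet> y - d) = 0 \<or> sgn (w \<bullet> y - d) = s"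
      using assms by (cases "w \<bullet> y - d > 0"; cases "w \<bullet> y - d < 0") auto
  qed
  moreover have "closed {y::'v. s * (w \<bullet> y - d) = \<bar>w \<bullet> y - d\<bar>}"
    by (intro closed_Collect_eq continuous_intros)
  ultimately show ?thesis by simp
qed

lemma sv_vals: "sv H z i = -1 \<or> sv H z i = 0 \<or> sv H z i = 1"
  by (auto simp: sv_def sgn_if)

lemma closure_open_face:
  fixes H :: "'i \<Rightarrow> 'v::euclidean_space \<times> real"
  assumes "sv H z = \<sigma>"
  shows "closure {y. sv H y = \<sigma>} = cf H \<sigma>"
proof
  have cl: "closed (cf H \<sigma>)"
  proof -
    have "cf H \<sigma> = (\<Inter>i. {y. sgn (fst (H i) \<bullet> y - snd (H i)) = 0 \<or> sgn (fst (H i) \<bullet> y - snd (H i)) = \<sigma> i})"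
      by (rule set_eqI) (simp add: cf_def conf_def sv_def)
    moreover have "\<And>i. closed {y. sgn (fst (H i) \<bullet> y - snd (H i)) = 0 \<or> sgn (fst (H i) \<bullet> y - snd (H i)) = \<sigma> i}"
      using assms sv_vals[of H z] by (intro closed_sgn_set) blast
    ultimately show ?thesis by auto
  qed
  show "closure {y. sv H y = \<sigma>} \<subseteq> cf H \<sigma>"
    by (rule closure_minimal[OF _ cl]) (auto simp: cf_def conf_def)
  show "cf H \<sigma> \<subseteq> closure {y. sv H y = \<sigma>}"
  proof
    fix y assume y: "y \<in> cf H \<sigma>"
    show "y \<in> closure {y. sv H y = \<sigma>}"
    proof (cases "y = z")
      case True then have "y \<in> {y. sv H y = \<sigma>}" using assms by simp
      then show ?thesis by (meson closure_subset subsetD)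
    next
      case False
      have "open_segment z y \<subseteq> {y. sv H y = \<sigma>}"
      proof
        fix x assume "x \<in> open_segment z y"
        then obtain u where u: "0 < u" "u < 1" "x = (1-u) *\<^sub>R z + u *\<^sub>R y"
          by (auto simp: in_segment)
        have "sv H x i = \<sigma> i" for i
        proof -
          have e: "fst (H i) \<bullet> x - snd (H i) = (1-u) * (fst (H i) \<bullet> z - snd (H i)) + u * (fst (H i) \<bullet> y - snd (H i))"
            by (simp add: u(3) inner_add_right algebra_simps)
          have "sgn (fst (H i) \<bullet> y - snd (H i)) = 0 \<or> sgn (fst (H i) \<bullet> y - snd (H i)) = sgn (fst (H i) \<bullet> z - snd (H i))"
            using y assms by (auto simp: cf_def conf_def sv_def)
          then show ?thesis using sgn_comb[OF u(1,2)] assms unfolding sv_def e by auto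
        qed
        then show "x \<in> {y. sv H y = \<sigma>}" by auto
      qed
      then have "closure (open_segment z y) \<subseteq> closure {y. sv H y = \<sigma>}" by (rule closure_mono)
      then show ?thesis using False by auto
    qed
  qed
qed

lemma conf_refl: "conf s s" by (simp add: conf_def)
lemma conf_trans: "conf r s \<Longrightarrow> conf s t \<Longrightarrow> conf r t"
  unfolding conf_def by metis
lemma conf_antisym: "conf r s \<Longrightarrow> conf s r \<Longrightarrow> r = s"
  unfolding conf_def by (rule ext) metis

lemma mem_cf: "y \<in> cf H \<sigma> \<longleftrightarrow> conf (sv H y) \<sigma>" by (simp add: cf_def)

lemma cf_subset_iff:
  assumes "\<sigma> \<in> range (sv H)" "\<tau> \<in> range (sv H)"
  shows "cf H \<sigma> \<subseteq> cf H \<tau> \<longleftrightarrow> conf \<sigma> \<tau>"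
proof
  obtain z where z: "sv H z = \<sigma>" using assms by auto
  assume "cf H \<sigma> \<subseteq> cf H \<tau>"
  moreover have "z \<in> cf H \<sigma>" using z by (simp add: mem_cf conf_refl)
  ultimately show "conf \<sigma> \<tau>" using z by (auto simp: mem_cf)
next
  assume "conf \<sigma> \<tau>" then show "cf H \<sigma> \<subseteq> cf H \<tau>"
    by (auto simp: mem_cf intro: conf_trans)
qed

lemma cf_inj:
  assumes "\<sigma> \<in> range (sv H)" "\<tau> \<in> range (sv H)" "cf H \<sigma> = cf H \<tau>"
  shows "\<sigma> = \<tau>"
  using cf_subset_iff[OF assms(1,2)] cf_subset_iff[OF assms(2,1)] assms(3) conf_antisym by auto

lemma arr_faces_eq:
  fixes H :: "'i \<Rightarrow> 'v::euclidean_space \<times> real"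
  shows "arr_faces UNIV H = cf H ` range (sv H)"
proof -
  have "arr_open_faces UNIV H = (\<lambda>z. {y. sv H y = sv H z}) ` UNIV"
    by (auto simp: arr_open_faces_def sgnvec_UNIV)
  then have "arr_faces UNIV H = (\<lambda>z. closure {y. sv H y = sv H z}) ` UNIV"
    by (simp add: arr_faces_def image_image)
  also have "\<dots> = (\<lambda>z. cf H (sv H z)) ` UNIV"
    by (rule image_cong) (simp_all add: closure_open_face)
  finally show ?thesis by (simp add: image_image)
qed

lemma comb_generic:
  fixes H :: "'i \<Rightarrow> 'v::euclidean_space \<times> real" and K :: "'i \<Rightarrow> 'w::euclidean_space \<times> real"
  assumes R: "range (sv H) = range (sv K)"
  shows "\<exists>\<Psi>. bij_betw \<Psi> (arr_faces UNIV H) (arr_faces UNIV K) \<and>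
     (\<forall>F\<in>arr_faces UNIV H. \<forall>G\<in>arr_faces UNIV H. F \<subseteq> G \<longleftrightarrow> \<Psi> F \<subseteq> \<Psi> G) \<and>
     (\<forall>\<sigma>\<in>range (sv H). \<Psi> (cf H \<sigma>) = cf K \<sigma>)"
proof -
  define \<Psi> where "\<Psi> F = cf K (SOME \<sigma>. \<sigma> \<in> range (sv H) \<and> F = cf H \<sigma>)" for F
  have P: "\<Psi> (cf H \<sigma>) = cf K \<sigma>" if "\<sigma> \<in> range (sv H)" for \<sigma>
  proof -
    have "(SOME \<sigma>'. \<sigma>' \<in> range (sv H) \<and> cf H \<sigma> = cf H \<sigma>') = \<sigma>"
    proof (rule some_equality)
      show "\<sigma> \<in> range (sv H) \<and> cf H \<sigma> = cf H \<sigma>" using that by simp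
      show "\<sigma>' = \<sigma>" if "\<sigma>' \<in> range (sv H) \<and> cf H \<sigma> = cf H \<sigma>'" for \<sigma>'
        using cf_inj \<open>\<sigma> \<in> range (sv H)\<close> that by metis
    qed
    then show ?thesis by (simp add: \<Psi>_def)
  qed
  have "bij_betw \<Psi> (arr_faces UNIV H) (arr_faces UNIV K)"
  proof (rule bij_betw_imageI)
    show "inj_on \<Psi> (arr_faces UNIV H)"
      unfolding arr_faces_eq inj_on_def
    proof (intro ballI impI)
      fix F G assume F: "F \<in> cf H ` range (sv H)" and G: "G \<in> cf H ` range (sv H)" and e: "\<Psi> F = \<Psi> G"
      obtain \<sigma> where s: "\<sigma> \<in> range (sv H)" "F = cf H \<sigma>" using F by blast
      obtain \<tau> where t: "\<tau> \<in> range (sv H)" "G = cf H \<tau>" using G by blast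
      have "cf K \<sigma> = cf K \<tau>" using e P s t by simp
      then have "\<sigma> = \<tau>" using cf_inj[of \<sigma> K \<tau>] s t R by simp
      then show "F = G" using s t by simp
    qed
    show "\<Psi> ` arr_faces UNIV H = arr_faces UNIV K"
      unfolding arr_faces_eq using P R by (simp add: image_image)
  qed
  moreover have "\<forall>F\<in>arr_faces UNIV H. \<forall>G\<in>arr_faces UNIV H. F \<subseteq> G \<longleftrightarrow> \<Psi> F \<subseteq> \<Psi> G"
    unfolding arr_faces_eq
  proof (intro ballI)
    fix F G assume F: "F \<in> cf H ` range (sv H)" and G: "G \<in> cf H ` range (sv H)"
    obtain \<sigma> where s: "\<sigma> \<in> range (sv H)" "F = cf H \<sigma>" using F by blast
    obtain \<tau> where t: "\<tau> \<in> range (sv H)" "G = cf H \<tau>" using G by blast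
    have "F \<subseteq> G \<longleftrightarrow> conf \<sigma> \<tau>" using cf_subset_iff[OF s(1) t(1)] s t by simp
    moreover have "\<Psi> F \<subseteq> \<Psi> G \<longleftrightarrow> conf \<sigma> \<tau>" using cf_subset_iff[of \<sigma> K \<tau>] s t P R by simp
    ultimately show "F \<subseteq> G \<longleftrightarrow> \<Psi> F \<subseteq> \<Psi> G" by simp
  qed
  ultimately show ?thesis using P by blast
qed



definition ncs :: "('i \<Rightarrow> 'v::real_inner) \<Rightarrow> ('i \<Rightarrow> real) \<Rightarrow> ('i \<Rightarrow> real) \<Rightarrow> 'v set" where
  "ncs w \<sigma> \<tau> = {v. \<forall>d. (\<forall>i. \<tau> i = 0 \<longrightarrow> sgn (w i \<bullet> d) = 0 \<or> sgn (w i \<bullet> d) = \<sigma> i) \<longrightarrow> v \<bullet> d \<le> 0}"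

lemma normal_cone_char:
  assumes "x \<in> S"
  shows "normal_cone_at S x = {v. \<forall>y\<in>S. v \<bullet> y \<le> v \<bullet> x}"
proof -
  have "ereal (v \<bullet> x) = support_fn S v \<longleftrightarrow> (\<forall>y\<in>S. v \<bullet> y \<le> v \<bullet> x)" for v
  proof
    assume h: "ereal (v \<bullet> x) = support_fn S v"
    show "\<forall>y\<in>S. v \<bullet> y \<le> v \<bullet> x"
    proof
      fix y assume "y \<in> S"
      then have "ereal (v \<bullet> y) \<le> support_fn S v" unfolding support_fn_def by (rule SUP_upper)
      then have "ereal (v \<bullet> y) \<le> ereal (v \<bullet> x)" using h by simp
      then show "v \<bullet> y \<le> v \<bullet> x" by simp
    qed
  next
    assume h: "\<forall>y\<in>S. v \<bullet> y \<le> v \<bullet> x"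
    have "support_fn S v \<le> ereal (v \<bullet> x)" unfolding support_fn_def
      using h by (intro SUP_least) simp
    moreover have "ereal (v \<bullet> x) \<le> support_fn S v" unfolding support_fn_def
      using assms by (rule SUP_upper)
    ultimately show "ereal (v \<bullet> x) = support_fn S v" by simp
  qed
  then show ?thesis by (auto simp: normal_cone_at_def)
qed

lemma sgn_eq_pm:
  fixes t s :: real
  assumes "s = 1 \<or> s = -1"
  shows "sgn t = s \<longleftrightarrow> 0 < s * t"
  using assms by (cases "t > 0"; cases "t < 0") (auto simp: zero_less_mult_iff)

lemma open_U:
  fixes H :: "'i::finite \<Rightarrow> 'v::euclidean_space \<times> real"
  shows "open {y. \<forall>i. sv H x i \<noteq> 0 \<longrightarrow> sv H y i = sv H x i}"
proof -
  have eq: "sv H x i \<noteq> 0 \<Longrightarrow> (sv H y i = sv H x i \<longleftrightarrow> 0 < sv H x i * (fst (H i) \<bullet> y - snd (H i)))" for i y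
    using sgn_eq_pm[of "sv H x i" "fst (H i) \<bullet> y - snd (H i)"] sv_vals[of H x i] unfolding sv_def by auto
  have "{y. \<forall>i. sv H x i \<noteq> 0 \<longrightarrow> sv H y i = sv H x i} =
     (\<Inter>i\<in>{i. sv H x i \<noteq> 0}. {y. 0 < sv H x i * (fst (H i) \<bullet> y - snd (H i))})"
  proof (rule set_eqI)
    fix y
    have "(\<forall>i. sv H x i \<noteq> 0 \<longrightarrow> sv H y i = sv H x i) \<longleftrightarrow>
          (\<forall>i\<in>{i. sv H x i \<noteq> 0}. 0 < sv H x i * (fst (H i) \<bullet> y - snd (H i)))"
      using eq by simp
    then show "y \<in> {y. \<forall>i. sv H x i \<noteq> 0 \<longrightarrow> sv H y i = sv H x i} \<longleftrightarrow>
       y \<in> (\<Inter>i\<in>{i. sv H x i \<noteq> 0}. {y. 0 < sv H x i * (fst (H i) \<bullet> y - snd (H i))})"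
      by simp
  qed
  moreover have "open {y. 0 < sv H x i * (fst (H i) \<bullet> y - snd (H i))}" for i
  proof -
    have "continuous_on UNIV (\<lambda>y. sv H x i * (fst (H i) \<bullet> y - snd (H i)))"
      by (intro continuous_intros)
    then show ?thesis by (rule open_Collect_less[OF continuous_on_const])
  qed
  then have "open (\<Inter>i\<in>{i. sv H x i \<noteq> 0}. {y. 0 < sv H x i * (fst (H i) \<bullet> y - snd (H i))})"
    by (intro open_INT) auto
  ultimately show ?thesis by simp
qed

lemma ball_U:
  fixes H :: "'i::finite \<Rightarrow> 'v::euclidean_space \<times> real"
  obtains e where "e > 0" "\<And>y. dist x y < e \<Longrightarrow> (\<forall>i. sv H x i \<noteq> 0 \<longrightarrow> sv H y i = sv H x i)"
proof -
  define U where "U = {y. \<forall>i. sv H x i \<noteq> 0 \<longrightarrow> sv H y i = sv H x i}"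
  have "open U" unfolding U_def by (rule open_U)
  moreover have "x \<in> U" unfolding U_def by simp
  ultimately obtain e where e: "e > 0" "ball x e \<subseteq> U" by (rule openE)
  have "\<forall>i. sv H x i \<noteq> 0 \<longrightarrow> sv H y i = sv H x i" if "dist x y < e" for y
  proof -
    have "y \<in> ball x e" using that by simp
    then have "y \<in> U" using e(2) by (rule subsetD[rotated])
    then show ?thesis unfolding U_def by simp
  qed
  then show ?thesis using that e(1) by blast
qed

lemma nc_eq:
  fixes H :: "'i::finite \<Rightarrow> 'v::euclidean_space \<times> real"
  assumes x: "x \<in> cf H \<sigma>"
  shows "normal_cone_at (cf H \<sigma>) x = ncs (\<lambda>i. fst (H i)) \<sigma> (sv H x)"
proof -
  have xc: "conf (sv H x) \<sigma>" using x by (simp add: mem_cf)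
  have "{v. \<forall>y\<in>cf H \<sigma>. v \<bullet> y \<le> v \<bullet> x} = ncs (\<lambda>i. fst (H i)) \<sigma> (sv H x)"
  proof (intro set_eqI iffI)
    fix v assume v: "v \<in> ncs (\<lambda>i. fst (H i)) \<sigma> (sv H x)"
    show "v \<in> {v. \<forall>y\<in>cf H \<sigma>. v \<bullet> y \<le> v \<bullet> x}"
    proof (simp, intro ballI)
      fix y assume y: "y \<in> cf H \<sigma>"
      have "\<forall>i. sv H x i = 0 \<longrightarrow> sgn (fst (H i) \<bullet> (y - x)) = 0 \<or> sgn (fst (H i) \<bullet> (y - x)) = \<sigma> i"
      proof (intro allI impI)
        fix i assume "sv H x i = 0"
        then have "fst (H i) \<bullet> (y - x) = fst (H i) \<bullet> y - snd (H i)"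
          by (simp add: sv_def inner_diff_right sgn_0_0)
        moreover have "sv H y i = 0 \<or> sv H y i = \<sigma> i" using y by (simp add: mem_cf conf_def)
        ultimately show "sgn (fst (H i) \<bullet> (y - x)) = 0 \<or> sgn (fst (H i) \<bullet> (y - x)) = \<sigma> i"
          by (simp add: sv_def)
      qed
      then have "v \<bullet> (y - x) \<le> 0" using v by (simp add: ncs_def)
      then show "v \<bullet> y \<le> v \<bullet> x" by (simp add: inner_diff_right)
    qed
  next
    fix v assume v: "v \<in> {v. \<forall>y\<in>cf H \<sigma>. v \<bullet> y \<le> v \<bullet> x}"
    show "v \<in> ncs (\<lambda>i. fst (H i)) \<sigma> (sv H x)"
    unfolding ncs_def
    proof (intro CollectI allI impI)
      fix d assume d: "\<forall>i. sv H x i = 0 \<longrightarrow> sgn (fst (H i) \<bullet> d) = 0 \<or> sgn (fst (H i) \<bullet> d) = \<sigma> i"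
      obtain e where e: "e > 0" "\<And>y. dist x y < e \<Longrightarrow> (\<forall>i. sv H x i \<noteq> 0 \<longrightarrow> sv H y i = sv H x i)"
        using ball_U by blast
      define t where "t = e / (2 * (norm d + 1))"
      have pos: "0 < 2 * (norm d + 1)" by (smt (verit) norm_ge_zero)
      have t: "t > 0" unfolding t_def using divide_pos_pos[OF e(1) pos] .
      have "t * norm d < e"
      proof -
        have "t * norm d \<le> t * (norm d + 1)" using t by simp
        also have "\<dots> = e / 2" unfolding t_def using pos by (simp add: field_simps)
        finally show ?thesis using e by simp
      qed
      then have dd: "dist x (x + t *\<^sub>R d) < e" using t by (simp add: dist_norm)
      have "x + t *\<^sub>R d \<in> cf H \<sigma>"
        unfolding mem_cf conf_def
      proof
        fix i
        show "sv H (x + t *\<^sub>R d) i = 0 \<or> sv H (x + t *\<^sub>R d) i = \<sigma> i"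
        proof (cases "sv H x i = 0")
          case True
          then have "fst (H i) \<bullet> x - snd (H i) = 0" by (simp add: sv_def sgn_0_0)
          then have "sv H (x + t *\<^sub>R d) i = sgn (t * (fst (H i) \<bullet> d))"
            by (simp add: sv_def inner_add_right algebra_simps)
          also have "\<dots> = sgn (fst (H i) \<bullet> d)" using t by (simp add: sgn_mult)
          finally show ?thesis using d True by simp
        next
          case False
          have "sv H (x + t *\<^sub>R d) i = sv H x i" using e(2)[OF dd] False by blast
          moreover have "sv H x i = \<sigma> i" using xc False unfolding conf_def by blast
          ultimately show ?thesis by simp
        qed
      qed
      then have "v \<bullet> (x + t *\<^sub>R d) \<le> v \<bullet> x" using v by simp
      then have "t * (v \<bullet> d) \<le> 0" by (simp add: inner_add_right)
      then show "v \<bullet> d \<le> 0" using t by (simp add: mult_le_0_iff)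
    qed
  qed
  then show ?thesis using normal_cone_char[OF x] by simp
qed

lemma sgn_cvx:
  fixes p q c1 c2 s :: real
  assumes "c1 \<ge> 0" "c2 \<ge> 0" "c1 + c2 = 1" "sgn p = 0 \<or> sgn p = s" "sgn q = 0 \<or> sgn q = s"
  shows "sgn (c1 * p + c2 * q) = 0 \<or> sgn (c1 * p + c2 * q) = s"
proof -
  consider "p = 0" "q = 0" | "s = 1" "p \<ge> 0" "q \<ge> 0" | "s = -1" "p \<le> 0" "q \<le> 0"
    using assms(4,5) by (auto simp: sgn_if split: if_splits)
  then show ?thesis
  proof cases
    case 2
    then have "c1 * p + c2 * q \<ge> 0" using assms by simp
    then show ?thesis using 2 by (auto simp: sgn_if)
  next
    case 3
    then have "c1 * p + c2 * q \<le> 0" using assms by (simp add: add_nonpos_nonpos mult_nonneg_nonpos)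
    then show ?thesis using 3 by (auto simp: sgn_if)
  qed simp
qed

lemma sgn_seg0:
  fixes p q u s :: real
  assumes "0 < u" "u < 1" "(1-u)*p + u*q = 0" "sgn p = 0 \<or> sgn p = s" "sgn q = 0 \<or> sgn q = s"
  shows "p = 0"
proof -
  have u1: "0 < 1 - u" using assms by simp
  consider "p = 0" "q = 0" | "s = 1" "p \<ge> 0" "q \<ge> 0" | "s = -1" "p \<le> 0" "q \<le> 0"
    using assms(4,5) by (auto simp: sgn_if split: if_splits)
  then show ?thesis
  proof cases
    case 2
    then show ?thesis using assms u1
      by (smt (verit) mult_nonneg_nonneg mult_pos_pos)
  next
    case 3
    then show ?thesis using assms u1
      by (smt (verit) mult_nonneg_nonpos mult_pos_neg)
  qed simp
qed

lemma convex_cf: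
  fixes H :: "'i \<Rightarrow> 'v::euclidean_space \<times> real"
  shows "convex (cf H \<sigma>)"
  unfolding convex_def
proof (intro ballI allI impI)
  fix x y and u v :: real assume xy: "x \<in> cf H \<sigma>" "y \<in> cf H \<sigma>" and uv: "0 \<le> u" "0 \<le> v" "u + v = 1"
  show "u *\<^sub>R x + v *\<^sub>R y \<in> cf H \<sigma>"
    unfolding mem_cf conf_def
  proof
    fix i
    have e: "fst (H i) \<bullet> (u *\<^sub>R x + v *\<^sub>R y) - snd (H i) =
       u * (fst (H i) \<bullet> x - snd (H i)) + v * (fst (H i) \<bullet> y - snd (H i))"
      using uv(3) by (simp add: inner_add_right algebra_simps) (metis add.commute distrib_right mult_1 add_diff_cancel_right')
    show "sv H (u *\<^sub>R x + v *\<^sub>R y) i = 0 \<or> sv H (u *\<^sub>R x + v *\<^sub>R y) i = \<sigma> i"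
      unfolding sv_def e using xy uv by (intro sgn_cvx) (auto simp: mem_cf conf_def sv_def)
  qed
qed

lemma face_rel:
  fixes H :: "'i::finite \<Rightarrow> 'v::euclidean_space \<times> real"
  assumes x: "x \<in> cf H \<sigma>"
  shows "cf H (sv H x) face_of cf H \<sigma>" "x \<in> rel_interior (cf H (sv H x))"
proof -
  have xc: "conf (sv H x) \<sigma>" using x by (simp add: mem_cf)
  show "cf H (sv H x) face_of cf H \<sigma>"
    unfolding face_of_def
  proof (intro conjI ballI impI)
    show "cf H (sv H x) \<subseteq> cf H \<sigma>" using xc by (auto simp: mem_cf intro: conf_trans)
    show "convex (cf H (sv H x))" by (rule convex_cf)
    fix a b z assume ab: "a \<in> cf H \<sigma>" "b \<in> cf H \<sigma>" and z: "z \<in> cf H (sv H x)" "z \<in> open_segment a b"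
    obtain u where u: "0 < u" "u < 1" "z = (1-u) *\<^sub>R a + u *\<^sub>R b"
      using z(2) by (auto simp: in_segment)
    have key: "sv H a i = 0 \<or> sv H a i = sv H x i" and key2: "sv H b i = 0 \<or> sv H b i = sv H x i" for i
    proof -
      have ea: "sv H a i = 0 \<or> sv H a i = \<sigma> i" "sv H b i = 0 \<or> sv H b i = \<sigma> i"
        using ab by (auto simp: mem_cf conf_def)
      have "(sv H a i = 0 \<or> sv H a i = sv H x i) \<and> (sv H b i = 0 \<or> sv H b i = sv H x i)"
      proof (cases "sv H x i = 0")
        case True
        then have "sv H z i = 0" using z(1) unfolding mem_cf conf_def by metis
        then have "(1-u) * (fst (H i) \<bullet> a - snd (H i)) + u * (fst (H i) \<bullet> b - snd (H i)) = 0"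
          by (simp add: sv_def u(3) inner_add_right algebra_simps sgn_0_0)
        moreover have "u * (fst (H i) \<bullet> b - snd (H i)) + (1-u) * (fst (H i) \<bullet> a - snd (H i)) = 0"
          using calculation by simp
        have ea': "sgn (fst (H i) \<bullet> a - snd (H i)) = 0 \<or> sgn (fst (H i) \<bullet> a - snd (H i)) = \<sigma> i"
           "sgn (fst (H i) \<bullet> b - snd (H i)) = 0 \<or> sgn (fst (H i) \<bullet> b - snd (H i)) = \<sigma> i"
          using ea unfolding sv_def by blast+
        have pa: "fst (H i) \<bullet> a - snd (H i) = 0"
          using sgn_seg0[OF u(1) u(2) calculation(1) ea'(1) ea'(2)] .
        then have "u * (fst (H i) \<bullet> b - snd (H i)) = 0" using calculation(1) by simp
        then have "fst (H i) \<bullet> b - snd (H i) = 0" using u(1) by simp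
        then show ?thesis using pa by (simp add: sv_def)
      next
        case False
        then have "sv H x i = \<sigma> i" using xc unfolding conf_def by blast
        then show ?thesis using ea by simp
      qed
      then show "sv H a i = 0 \<or> sv H a i = sv H x i" "sv H b i = 0 \<or> sv H b i = sv H x i" by auto
    qed
    show "a \<in> cf H (sv H x)" using key by (simp add: mem_cf conf_def)
    show "b \<in> cf H (sv H x)" using key2 by (simp add: mem_cf conf_def)
  qed
  show "x \<in> rel_interior (cf H (sv H x))"
    unfolding mem_rel_interior_ball
  proof (intro conjI)
    show "x \<in> cf H (sv H x)" by (simp add: mem_cf conf_refl)
    obtain e where e: "e > 0" "\<And>y. dist x y < e \<Longrightarrow> (\<forall>i. sv H x i \<noteq> 0 \<longrightarrow> sv H y i = sv H x i)"
      using ball_U by blast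
    define A where "A = (\<Inter>i\<in>{i. sv H x i = 0}. {y. fst (H i) \<bullet> y = snd (H i)})"
    have "affine A" unfolding A_def by (rule affine_Inter) (auto simp: affine_hyperplane)
    moreover have "cf H (sv H x) \<subseteq> A"
    proof
      fix y assume "y \<in> cf H (sv H x)"
      then have c: "\<forall>i. sv H y i = 0 \<or> sv H y i = sv H x i" by (simp add: mem_cf conf_def)
      show "y \<in> A" unfolding A_def
      proof (intro INT_I CollectI)
        fix i assume "i \<in> {i. sv H x i = 0}"
        then have "sv H y i = 0" using c by auto
        then show "fst (H i) \<bullet> y = snd (H i)" by (simp add: sv_def sgn_0_0)
      qed
    qed
    ultimately have "affine hull cf H (sv H x) \<subseteq> A" by (simp add: hull_minimal)
    moreover have "ball x e \<inter> A \<subseteq> cf H (sv H x)"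
    proof
      fix y assume y: "y \<in> ball x e \<inter> A"
      have "sv H y i = sv H x i" for i
      proof (cases "sv H x i = 0")
        case True then show ?thesis using y by (simp add: A_def sv_def)
      next
        case False then show ?thesis using e(2) y by auto
      qed
      then show "y \<in> cf H (sv H x)" by (simp add: mem_cf conf_def)
    qed
    ultimately show "\<exists>e>0. ball x e \<inter> affine hull cf H (sv H x) \<subseteq> cf H (sv H x)"
      using e(1) by blast
  qed
qed

lemma normal_fan_cf:
  fixes H :: "'i::finite \<Rightarrow> 'v::euclidean_space \<times> real"
  shows "normal_fan (cf H \<sigma>) = (\<lambda>\<tau>. ncs (\<lambda>i. fst (H i)) \<sigma> \<tau>) ` {\<tau> \<in> range (sv H). conf \<tau> \<sigma>}"
proof (intro set_eqI iffI)
  fix N assume "N \<in> normal_fan (cf H \<sigma>)"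
  then obtain G x where G: "G face_of cf H \<sigma>" "x \<in> rel_interior G" "N = normal_cone_at (cf H \<sigma>) x"
    by (auto simp: normal_fan_def)
  have "x \<in> cf H \<sigma>" using G face_of_imp_subset rel_interior_subset by blast
  then show "N \<in> (\<lambda>\<tau>. ncs (\<lambda>i. fst (H i)) \<sigma> \<tau>) ` {\<tau> \<in> range (sv H). conf \<tau> \<sigma>}"
    using G(3) nc_eq[OF \<open>x \<in> cf H \<sigma>\<close>] \<open>x \<in> cf H \<sigma>\<close>
    by (intro rev_image_eqI[of "sv H x"]) (auto simp: mem_cf)
next
  fix N assume "N \<in> (\<lambda>\<tau>. ncs (\<lambda>i. fst (H i)) \<sigma> \<tau>) ` {\<tau> \<in> range (sv H). conf \<tau> \<sigma>}"
  then obtain x where x: "conf (sv H x) \<sigma>" "N = ncs (\<lambda>i. fst (H i)) \<sigma> (sv H x)" by auto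
  then have xm: "x \<in> cf H \<sigma>" by (simp add: mem_cf)
  have "cf H (sv H x) \<noteq> {}" using face_rel(2)[OF xm] rel_interior_subset by blast
  then show "N \<in> normal_fan (cf H \<sigma>)" unfolding normal_fan_def
    using face_rel[OF xm] nc_eq[OF xm] x(2) by blast
qed



lemma sep_range:
  fixes L :: "'a::euclidean_space \<Rightarrow> 'b::euclidean_space"
  assumes lin: "linear L" and z: "z \<notin> range L"
  shows "\<exists>w. (\<forall>x. w \<bullet> L x = 0) \<and> w \<bullet> z < 0"
proof -
  have sub: "subspace (range L)" using linear_subspace_image[OF lin subspace_UNIV] .
  obtain a \<beta> where ab: "a \<bullet> z < \<beta>" "\<forall>x\<in>range L. a \<bullet> x > \<beta>"
    using separating_hyperplane_closed_point[OF subspace_imp_convex[OF sub] closed_subspace[OF sub] z] by blast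
  have "L 0 = 0" using lin by (simp add: linear_0)
  then have b0: "\<beta> < 0" using ab(2) by (metis inner_zero_right rangeI)
  have "a \<bullet> L x = 0" for x
  proof (rule ccontr)
    assume ne: "a \<bullet> L x \<noteq> 0"
    define t where "t = \<beta> / (a \<bullet> L x)"
    have "a \<bullet> L (t *\<^sub>R x) = t * (a \<bullet> L x)" using lin by (simp add: linear_scale)
    also have "\<dots> = \<beta>" using ne by (simp add: t_def)
    finally show False using ab(2) by (metis less_irrefl rangeI)
  qed
  then show ?thesis using ab(1) b0 by (intro exI[of _ a]) auto
qed



definition dep :: "('m::finite \<Rightarrow> real^'n) \<Rightarrow> ('m \<Rightarrow> real) \<Rightarrow> bool" where
  "dep u l \<longleftrightarrow> (\<Sum>i\<in>UNIV. l i *\<^sub>R u i) = 0"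

definition cert :: "('m::finite \<Rightarrow> real^'n) \<Rightarrow> real^'m \<Rightarrow> ('m \<Rightarrow> real) \<Rightarrow> ('m \<Rightarrow> real) \<Rightarrow> bool" where
  "cert u b s l \<longleftrightarrow> dep u l \<and> (\<forall>i. s i \<noteq> 0 \<longrightarrow> 0 \<le> l i * s i) \<and>
     (0 < (\<Sum>i\<in>UNIV. l i * b$i) \<or> ((\<Sum>i\<in>UNIV. l i * b$i) = 0 \<and> (\<exists>i. s i \<noteq> 0 \<and> l i \<noteq> 0)))"

lemma motzkin_case1:
  fixes u :: "'m::finite \<Rightarrow> real^'n" and b :: "real^'m"
  assumes ns: "\<not> (\<exists>y. \<forall>i. s i = 0 \<longrightarrow> u i \<bullet> y = b$i)"
  shows "\<exists>l. cert u b s l"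
proof -
  define L where "L y = (\<chi> i. if s i = 0 then u i \<bullet> y else 0)" for y :: "real^'n"
  have lin: "linear L"
    by (rule linearI) (simp_all add: L_def vec_eq_iff inner_add_right)
  define z where "z = (\<chi> i. if s i = 0 then b$i else (0::real))"
  have "z \<notin> range L"
  proof
    assume "z \<in> range L"
    then obtain y where "z = L y" by auto
    then have "\<forall>i. z$i = L y $i" by (simp add: vec_eq_iff)
    have "\<forall>i. s i = 0 \<longrightarrow> u i \<bullet> y = b$i"
    proof (intro allI impI)
      fix i assume si: "s i = 0"
      have "z$i = L y $i" using \<open>z = L y\<close> by simp
      then show "u i \<bullet> y = b$i" using si by (simp add: z_def L_def)
    qed
    then show False using ns by blast
  qed
  then obtain w where w: "\<forall>y. w \<bullet> L y = 0" "w \<bullet> z < 0" using sep_range[OF lin] by blast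
  define W where "W = (\<Sum>i\<in>UNIV. (if s i = 0 then w$i else 0) *\<^sub>R u i)"
  have wl: "w \<bullet> L y = W \<bullet> y" for y
  proof -
    have "w \<bullet> L y = (\<Sum>i\<in>UNIV. w$i * (if s i = 0 then u i \<bullet> y else 0))"
      unfolding inner_vec_def[of w "L y"] by (simp add: L_def)
    also have "\<dots> = W \<bullet> y"
      unfolding W_def inner_sum_left by (intro sum.cong) auto
    finally show ?thesis .
  qed
  have "W \<bullet> W = 0" using w(1) wl by simp
  then have W0: "W = 0" by simp
  define l where "l i = (if s i = 0 then - (w$i) else 0)" for i
  have "(\<Sum>i\<in>UNIV. l i *\<^sub>R u i) = - W"
    unfolding W_def l_def sum_negf[symmetric] by (intro sum.cong) auto
  then have "dep u l" using W0 by (simp add: dep_def)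
  moreover have "(\<Sum>i\<in>UNIV. l i * b$i) = - (w \<bullet> z)"
    unfolding l_def z_def inner_vec_def[of w] sum_negf[symmetric] by (intro sum.cong) auto
  ultimately have "cert u b s l" using w(2) by (simp add: cert_def l_def)
  then show ?thesis by blast
qed

lemma sgn_eq_pm':
  fixes t s :: real
  assumes "s = 1 \<or> s = -1"
  shows "sgn t = s \<longleftrightarrow> 0 < s * t"
  using assms by (cases "t > 0"; cases "t < 0") (auto simp: zero_less_mult_iff)

lemma convex_pos_orthant: "convex {v::real^'m. \<forall>i. 0 < v$i}"
  unfolding convex_def
proof (intro ballI allI impI)
  fix x y :: "real^'m" and c1 c2 :: real
  assume x: "x \<in> {v. \<forall>i. 0 < v$i}" and y: "y \<in> {v. \<forall>i. 0 < v$i}" and c: "0 \<le> c1" "0 \<le> c2" "c1 + c2 = 1"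
  have "0 < c1 * x$i + c2 * y$i" for i
  proof (cases "c1 = 0")
    case True then have "c2 = 1" using c by simp
    then show ?thesis using True y by simp
  next
    case False then have "c1 > 0" using c by simp
    then have "0 < c1 * x$i" using x by simp
    moreover have "0 \<le> c2 * y$i" using c y by (simp add: less_imp_le)
    ultimately show ?thesis by simp
  qed
  then show "c1 *\<^sub>R x + c2 *\<^sub>R y \<in> {v. \<forall>i. 0 < v$i}" by simp
qed

lemma orthant_closure:
  fixes a :: "real^'m"
  assumes "\<forall>v. (\<forall>i. 0 < v$i) \<longrightarrow> \<beta> \<le> a \<bullet> v" "\<forall>i. 0 \<le> v$i"
  shows "\<beta> \<le> a \<bullet> v"
proof -
  define one :: "real^'m" where "one = (\<chi> i. 1)"
  have "v \<in> closure {v. \<forall>i. 0 < v$i}"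
  proof (cases "v = one")
    case True
    then have "v \<in> {v. \<forall>i. 0 < v$i}" by (simp add: one_def)
    then show ?thesis by (meson closure_subset subsetD)
  next
    case False
    have "open_segment one v \<subseteq> {v. \<forall>i. 0 < v$i}"
    proof
      fix x assume "x \<in> open_segment one v"
      then obtain t where t: "0 < t" "t < 1" "x = (1 - t) *\<^sub>R one + t *\<^sub>R v" by (auto simp: in_segment)
      have "0 < x$i" for i
      proof -
        have "0 \<le> t * v$i" using t assms(2) by simp
        then show ?thesis using t by (simp add: one_def)
      qed
      then show "x \<in> {v. \<forall>i. 0 < v$i}" by simp
    qed
    then have "closure (open_segment one v) \<subseteq> closure {v. \<forall>i. 0 < v$i}" by (rule closure_mono)
    then show ?thesis using False by auto
  qed
  moreover have "closed {v::real^'m. \<beta> \<le> a \<bullet> v}"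
    by (intro closed_Collect_le continuous_intros)
  moreover have "{v::real^'m. \<forall>i. 0 < v$i} \<subseteq> {v. \<beta> \<le> a \<bullet> v}" using assms(1) by blast
  ultimately show ?thesis by (metis (no_types, lifting) closure_minimal mem_Collect_eq subsetD)
qed

lemma motzkin_case2:
  fixes u :: "'m::finite \<Rightarrow> real^'n" and b :: "real^'m"
  assumes nf: "\<forall>x. (\<lambda>i. sgn (u i \<bullet> x - b$i)) \<noteq> s" and sv: "\<forall>i. s i = -1 \<or> s i = 0 \<or> s i = 1"
    and y0: "\<forall>i. s i = 0 \<longrightarrow> u i \<bullet> y0 = b$i"
  shows "\<exists>l. cert u b s l"
proof -
  define Y0 where "Y0 = {y. \<forall>i. s i = 0 \<longrightarrow> u i \<bullet> y = b$i}"
  define \<phi> where "\<phi> y = (\<chi> i. if s i = 0 then 1 else s i * (u i \<bullet> y - b$i))" for y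
  define T where "T = {v::real^'m. \<forall>i. 0 < v$i}"
  have cS: "convex (\<phi> ` Y0)"
    unfolding convex_def
  proof (intro ballI allI impI)
    fix x y and c1 c2 :: real assume x: "x \<in> \<phi> ` Y0" and y: "y \<in> \<phi> ` Y0" and c: "0 \<le> c1" "0 \<le> c2" "c1 + c2 = 1"
    obtain x0 where x0: "x0 \<in> Y0" "x = \<phi> x0" using x by auto
    obtain y1 where y1: "y1 \<in> Y0" "y = \<phi> y1" using y by auto
    have "c1 *\<^sub>R x0 + c2 *\<^sub>R y1 \<in> Y0"
    proof -
      have "u i \<bullet> (c1 *\<^sub>R x0 + c2 *\<^sub>R y1) = b$i" if "s i = 0" for i
      proof -
        have "u i \<bullet> (c1 *\<^sub>R x0 + c2 *\<^sub>R y1) = c1 * b$i + c2 * b$i"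
          using x0 y1 that by (simp add: Y0_def inner_add_right)
        also have "\<dots> = b$i" using c(3) by (metis distrib_right mult_1)
        finally show ?thesis .
      qed
      then show ?thesis by (simp add: Y0_def)
    qed
    moreover have "c1 *\<^sub>R x + c2 *\<^sub>R y = \<phi> (c1 *\<^sub>R x0 + c2 *\<^sub>R y1)"
    proof -
      have "(c1 *\<^sub>R x + c2 *\<^sub>R y) $ i = \<phi> (c1 *\<^sub>R x0 + c2 *\<^sub>R y1) $ i" for i
      proof (cases "s i = 0")
        case True then show ?thesis using x0 y1 c(3) by (simp add: \<phi>_def)
      next
        case False
        have "c1 * (s i * (u i \<bullet> x0 - b$i)) + c2 * (s i * (u i \<bullet> y1 - b$i))
            = s i * (c1 * (u i \<bullet> x0) + c2 * (u i \<bullet> y1) - (c1 + c2) * b$i)"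
          by (simp add: algebra_simps)
        then show ?thesis using x0 y1 c(3) False by (simp add: \<phi>_def inner_add_right)
      qed
      then show ?thesis by (simp add: vec_eq_iff)
    qed
    ultimately show "c1 *\<^sub>R x + c2 *\<^sub>R y \<in> \<phi> ` Y0" by blast
  qed
  have ne: "\<phi> ` Y0 \<noteq> {}" using y0 by (auto simp: Y0_def)
  have neT: "T \<noteq> {}"
  proof -
    have "(\<chi> i. (1::real)) \<in> T" by (simp add: T_def)
    then show ?thesis by blast
  qed
  have disj: "\<phi> ` Y0 \<inter> T = {}"
  proof (rule ccontr)
    assume "\<phi> ` Y0 \<inter> T \<noteq> {}"
    then obtain y where y: "y \<in> Y0" "\<phi> y \<in> T" by blast
    have "sgn (u i \<bullet> y - b$i) = s i" for i
    proof (cases "s i = 0")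
      case True then show ?thesis using y(1) by (simp add: Y0_def)
    next
      case False
      then have "0 < s i * (u i \<bullet> y - b$i)" using y(2) spec[OF y(2)[unfolded T_def mem_Collect_eq], of i]
        by (simp add: \<phi>_def)
      then show ?thesis using sgn_eq_pm'[of "s i"] sv False by metis
    qed
    then show False using nf by blast
  qed
  obtain a \<beta> where ab: "a \<noteq> 0" "\<forall>x\<in>\<phi> ` Y0. a \<bullet> x \<le> \<beta>" "\<forall>x\<in>T. \<beta> \<le> a \<bullet> x"
    using separating_hyperplane_sets[OF cS convex_pos_orthant[where 'm='m, folded T_def] ne neT disj] by blast
  have nn: "\<beta> \<le> a \<bullet> v" if "\<forall>i. 0 \<le> v$i" for v
    using orthant_closure[of \<beta> a v] ab(3) that unfolding T_def by blast
  have b0: "\<beta> \<le> 0" using nn[of 0] by simp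
  have anneg: "0 \<le> a \<bullet> v" if "\<forall>i. 0 \<le> v$i" for v
  proof (rule ccontr)
    assume "\<not> 0 \<le> a \<bullet> v"
    then have neg: "a \<bullet> v < 0" by simp
    define t where "t = (\<beta> - 1) / (a \<bullet> v)"
    have t: "t > 0" unfolding t_def using neg b0 by (simp add: divide_neg_neg)
    have "\<forall>i. 0 \<le> (t *\<^sub>R v)$i" using t that by simp
    then have "\<beta> \<le> a \<bullet> (t *\<^sub>R v)" by (rule nn)
    also have "a \<bullet> (t *\<^sub>R v) = \<beta> - 1" using neg by (simp add: t_def)
    finally show False by simp
  qed
  have apos: "0 \<le> a$k" for k
  proof -
    have "\<forall>i. 0 \<le> axis k (1::real) $ i" by (simp add: axis_def)
    then show ?thesis using anneg[of "axis k 1"] by (simp add: inner_axis)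
  qed
  define cZ where "cZ = (\<Sum>i\<in>UNIV. if s i = 0 then a$i else 0)"
  define Wv where "Wv = (\<Sum>i\<in>UNIV. (if s i = 0 then 0 else a$i * s i) *\<^sub>R u i)"
  define cB where "cB = (\<Sum>i\<in>UNIV. if s i = 0 then 0 else a$i * s i * b$i)"
  have aphi: "a \<bullet> \<phi> y = cZ + Wv \<bullet> y - cB" for y
  proof -
    have "a \<bullet> \<phi> y = (\<Sum>i\<in>UNIV. a$i * (if s i = 0 then 1 else s i * (u i \<bullet> y - b$i)))"
      unfolding inner_vec_def[of a "\<phi> y"] by (simp add: \<phi>_def)
    also have "\<dots> = (\<Sum>i\<in>UNIV. (if s i = 0 then a$i else 0) + (if s i = 0 then 0 else a$i * s i) * (u i \<bullet> y)
                     - (if s i = 0 then 0 else a$i * s i * b$i))"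
      by (intro sum.cong) (auto simp: algebra_simps)
    also have "\<dots> = cZ + Wv \<bullet> y - cB"
      unfolding cZ_def Wv_def cB_def inner_sum_left by (simp add: sum.distrib sum_subtractf)
    finally show ?thesis .
  qed
  have y0Y: "y0 \<in> Y0" using y0 by (simp add: Y0_def)
  have Wd: "Wv \<bullet> d = 0" if d: "\<forall>i. s i = 0 \<longrightarrow> u i \<bullet> d = 0" for d
  proof (rule ccontr)
    assume ne0: "Wv \<bullet> d \<noteq> 0"
    define t where "t = (\<beta> - a \<bullet> \<phi> y0 + 1) / (Wv \<bullet> d)"
    have "y0 + t *\<^sub>R d \<in> Y0" using y0 d by (simp add: Y0_def inner_add_right)
    then have "a \<bullet> \<phi> (y0 + t *\<^sub>R d) \<le> \<beta>" using ab(2) by blast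
    moreover have "a \<bullet> \<phi> (y0 + t *\<^sub>R d) = a \<bullet> \<phi> y0 + t * (Wv \<bullet> d)"
      by (simp add: aphi inner_add_right algebra_simps)
    moreover have "t * (Wv \<bullet> d) = \<beta> - a \<bullet> \<phi> y0 + 1" using ne0 by (simp add: t_def)
    ultimately show False by simp
  qed
  define L2 where "L2 \<nu> = (\<Sum>i\<in>UNIV. (if s i = 0 then \<nu>$i else 0) *\<^sub>R u i)" for \<nu> :: "real^'m"
  have lin2: "linear L2"
  proof (rule linearI)
    show "L2 (b1 + b2) = L2 b1 + L2 b2" for b1 b2
      unfolding L2_def sum.distrib[symmetric] by (intro sum.cong) (auto simp: scaleR_add_left)
    show "L2 (r *\<^sub>R b) = r *\<^sub>R L2 b" for r b
      unfolding L2_def scaleR_sum_right by (intro sum.cong) auto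
  qed
  have "Wv \<in> range L2"
  proof (rule ccontr)
    assume "Wv \<notin> range L2"
    then obtain w where w: "\<forall>x. w \<bullet> L2 x = 0" "w \<bullet> Wv < 0" using sep_range[OF lin2] by blast
    have "u i \<bullet> w = 0" if "s i = 0" for i
    proof -
      have "L2 (axis i 1) = u i"
      proof -
        have "L2 (axis i 1) = (\<Sum>j\<in>UNIV. (if j = i then u i else 0))"
          unfolding L2_def by (intro sum.cong) (auto simp: axis_def that)
        then show ?thesis by simp
      qed
      then show ?thesis using w(1) by (metis inner_commute)
    qed
    then have "Wv \<bullet> w = 0" using Wd by blast
    then show False using w(2) by (simp add: inner_commute)
  qed
  then obtain \<nu> where nu: "Wv = L2 \<nu>" by auto
  define l where "l i = (if s i = 0 then - (\<nu>$i) else a$i * s i)" for i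
  have "(\<Sum>i\<in>UNIV. l i *\<^sub>R u i) = Wv - L2 \<nu>"
    unfolding l_def Wv_def L2_def sum_subtractf[symmetric] by (intro sum.cong) auto
  then have dep: "dep u l" using nu by (simp add: dep_def)
  have "Wv \<bullet> y0 = (\<Sum>i\<in>UNIV. if s i = 0 then \<nu>$i * b$i else 0)"
    unfolding nu L2_def inner_sum_left by (intro sum.cong) (auto simp: y0)
  moreover have "a \<bullet> \<phi> y0 \<le> 0" using ab(2) y0Y b0 by force
  ultimately have "cZ + (\<Sum>i\<in>UNIV. if s i = 0 then \<nu>$i * b$i else 0) - cB \<le> 0" using aphi by simp
  moreover have "(\<Sum>i\<in>UNIV. l i * b$i) = cB - (\<Sum>i\<in>UNIV. if s i = 0 then \<nu>$i * b$i else 0)"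
    unfolding cB_def l_def sum_subtractf[symmetric] by (intro sum.cong) auto
  ultimately have lb: "cZ \<le> (\<Sum>i\<in>UNIV. l i * b$i)" by simp
  have cZ0: "0 \<le> cZ" unfolding cZ_def using apos by (intro sum_nonneg) auto
  have sc: "\<forall>i. s i \<noteq> 0 \<longrightarrow> 0 \<le> l i * s i"
  proof (intro allI impI)
    fix i assume si: "s i \<noteq> 0"
    then have "s i * s i = 1" using sv by (metis mult_minus_left mult_1 minus_minus)
    then have "l i * s i = a$i" using si by (simp add: l_def mult.assoc)
    then show "0 \<le> l i * s i" using apos by simp
  qed
  show ?thesis
  proof (cases "0 < (\<Sum>i\<in>UNIV. l i * b$i)")
    case True then show ?thesis using dep sc by (auto simp: cert_def)
  next
    case False
    then have e: "(\<Sum>i\<in>UNIV. l i * b$i) = 0" and "cZ = 0" using lb cZ0 by linarith+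
    then have "\<forall>i\<in>UNIV. (if s i = 0 then a$i else 0) = 0" unfolding cZ_def
      using sum_nonneg_eq_0_iff[of UNIV "\<lambda>i. if s i = 0 then a$i else 0"] apos by simp
    then have aZ: "\<forall>i. s i = 0 \<longrightarrow> a$i = 0" by (metis UNIV_I)
    obtain k where k: "a$k \<noteq> 0" using ab(1) by (metis vec_eq_iff zero_index)
    then have sk: "s k \<noteq> 0" using aZ by blast
    then have "l k \<noteq> 0" using k sv by (auto simp: l_def)
    then show ?thesis using dep sc e sk by (auto simp: cert_def)
  qed
qed

lemma motzkin:
  fixes u :: "'m::finite \<Rightarrow> real^'n" and b :: "real^'m"
  assumes nf: "\<forall>x. (\<lambda>i. sgn (u i \<bullet> x - b$i)) \<noteq> s" and sv: "\<forall>i. s i = -1 \<or> s i = 0 \<or> s i = 1"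
  shows "\<exists>l. cert u b s l"
  using motzkin_case1 motzkin_case2[OF nf sv] by blast



lemma scal_step:
  fixes l m t :: real
  assumes t: "t > 0" and le: "0 < l*m \<longrightarrow> t \<le> l/m" and nz: "m \<noteq> 0 \<longrightarrow> l \<noteq> 0"
  shows "l - t*m \<noteq> 0 \<longrightarrow> sgn (l - t*m) = sgn l"
proof -
  consider "l > 0" "m > 0" | "l < 0" "m < 0" | "l > 0" "m \<le> 0" | "l < 0" "m \<ge> 0" | "l = 0"
    by linarith
  then show ?thesis
  proof cases
    case 1
    then have "t * m \<le> l" using le by (simp add: pos_le_divide_eq)
    then show ?thesis using 1 by (auto simp: sgn_if)
  next
    case 2
    then have "0 < l * m" by (simp add: mult_neg_neg)
    then have "l \<le> t * m" using le 2 by (simp add: neg_le_divide_eq)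
    then show ?thesis using 2 by (auto simp: sgn_if)
  next
    case 3
    then have "t * m \<le> 0" using t by (simp add: mult_nonneg_nonpos)
    then show ?thesis using 3 by (auto simp: sgn_if)
  next
    case 4
    then have "t * m \<ge> 0" using t by simp
    then show ?thesis using 4 by (auto simp: sgn_if)
  next
    case 5
    then show ?thesis using nz by auto
  qed
qed

lemma shrink:
  fixes l m :: "'m::finite \<Rightarrow> real"
  assumes sub: "\<forall>i. m i \<noteq> 0 \<longrightarrow> l i \<noteq> 0" and ne: "\<exists>i. 0 < l i * m i"
  obtains t where "t > 0" "\<forall>i. l i - t * m i \<noteq> 0 \<longrightarrow> sgn (l i - t * m i) = sgn (l i)"
    "\<exists>k. l k \<noteq> 0 \<and> l k - t * m k = 0"
proof -
  define A where "A = {i. 0 < l i * m i}"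
  have fA: "finite A" by simp
  have neA: "A \<noteq> {}" using ne by (auto simp: A_def)
  define t where "t = Min ((\<lambda>i. l i / m i) ` A)"
  have pos: "0 < l i / m i" if "i \<in> A" for i
    using that by (auto simp: A_def zero_less_mult_iff zero_less_divide_iff)
  have tle: "t \<le> l i / m i" if "i \<in> A" for i
    unfolding t_def using fA that by (intro Min_le) auto
  have "t \<in> (\<lambda>i. l i / m i) ` A" unfolding t_def using fA neA by (intro Min_in) auto
  then obtain k where k: "k \<in> A" "t = l k / m k" by auto
  have t: "t > 0" using pos k by simp
  have "\<forall>i. l i - t * m i \<noteq> 0 \<longrightarrow> sgn (l i - t * m i) = sgn (l i)"
  proof
    fix i
    show "l i - t * m i \<noteq> 0 \<longrightarrow> sgn (l i - t * m i) = sgn (l i)"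
      using scal_step[OF t, of "l i" "m i"] tle[of i] sub by (auto simp: A_def)
  qed
  moreover have "l k \<noteq> 0 \<and> l k - t * m k = 0"
  proof -
    have "0 < l k * m k" using k by (simp add: A_def)
    then have "m k \<noteq> 0" "l k \<noteq> 0" by auto
    then show ?thesis using k by simp
  qed
  ultimately show ?thesis using that t by blast
qed

lemma card_supp_less:
  fixes l l' :: "'m::finite \<Rightarrow> real"
  assumes "\<forall>i. l' i \<noteq> 0 \<longrightarrow> l i \<noteq> 0" "l k \<noteq> 0" "l' k = 0"
  shows "card {i. l' i \<noteq> 0} < card {i. l i \<noteq> 0}"
proof (rule psubset_card_mono)
  show "finite {i. l i \<noteq> 0}" by simp
  show "{i. l' i \<noteq> 0} \<subset> {i. l i \<noteq> 0}" using assms by auto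
qed

lemma dep_sub:
  fixes u :: "'m::finite \<Rightarrow> real^'n"
  assumes "dep u l" "\<forall>i. l i \<noteq> 0 \<longrightarrow> i \<in> D"
  shows "(\<Sum>i\<in>D. l i *\<^sub>R u i) = 0"
proof -
  have "(\<Sum>i\<in>D. l i *\<^sub>R u i) = (\<Sum>i\<in>UNIV. l i *\<^sub>R u i)"
    using assms(2) by (intro sum.mono_neutral_left) auto
  then show ?thesis using assms(1) by (simp add: dep_def)
qed

lemma dep_diff:
  assumes "dep u l" "dep u m"
  shows "dep u (\<lambda>i. l i - t * m i)"
proof -
  have "(\<Sum>i\<in>UNIV. (l i - t * m i) *\<^sub>R u i) = (\<Sum>i\<in>UNIV. l i *\<^sub>R u i) - t *\<^sub>R (\<Sum>i\<in>UNIV. m i *\<^sub>R u i)"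
    by (simp add: scaleR_diff_left sum_subtractf scaleR_sum_right)
  then show ?thesis using assms by (simp add: dep_def)
qed

lemma dep_scale:
  assumes "dep u l"
  shows "dep u (\<lambda>i. t * l i)"
proof -
  have "(\<Sum>i\<in>UNIV. (t * l i) *\<^sub>R u i) = t *\<^sub>R (\<Sum>i\<in>UNIV. l i *\<^sub>R u i)"
    by (simp add: scaleR_sum_right)
  then show ?thesis using assms by (simp add: dep_def)
qed

lemma circ_dep:
  assumes cv: "circuit_vectors u c" and C: "circuit u C"
  shows "dep u (\<lambda>i. c C $ i)" "\<And>i. c C $ i \<noteq> 0 \<longleftrightarrow> i \<in> C"
  using cv C by (auto simp: circuit_vectors_def dep_def)

lemma one_dim:
  fixes u :: "'m::finite \<Rightarrow> real^'n"
  assumes cv: "circuit_vectors u c" and C: "circuit u C" and l: "dep u l" and sub: "\<forall>i. l i \<noteq> 0 \<longrightarrow> i \<in> C"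
  shows "\<exists>\<kappa>. \<forall>i. l i = \<kappa> * c C $ i"
proof -
  have "C \<noteq> {}"
  proof
    assume "C = {}"
    then have "indep_family u C" by (simp add: indep_family_def)
    then show False using C by (simp add: circuit_def)
  qed
  then obtain j where j: "j \<in> C" by auto
  have cj: "c C $ j \<noteq> 0" using circ_dep(2)[OF cv C] j by simp
  define \<kappa> where "\<kappa> = l j / c C $ j"
  define m where "m i = l i - \<kappa> * c C $ i" for i
  have dm: "dep u m" unfolding m_def by (rule dep_diff[OF l circ_dep(1)[OF cv C]])
  have ms: "\<forall>i. m i \<noteq> 0 \<longrightarrow> i \<in> C - {j}"
  proof (intro allI impI)
    fix i assume "m i \<noteq> 0"
    moreover have "m j = 0" using cj by (simp add: m_def \<kappa>_def)
    moreover have "m i = 0" if "i \<notin> C"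
    proof -
      have "l i = 0" using sub that by blast
      moreover have "c C $ i = 0" using circ_dep(2)[OF cv C, of i] that by blast
      ultimately show ?thesis by (simp add: m_def)
    qed
    ultimately show "i \<in> C - {j}" by auto
  qed
  have "indep_family u (C - {j})" using C j by (auto simp: circuit_def)
  moreover have "(\<Sum>i\<in>C - {j}. m i *\<^sub>R u i) = 0" using dep_sub[OF dm ms] .
  ultimately have "\<forall>i\<in>C - {j}. m i = 0" by (simp add: indep_family_def)
  then have "\<forall>i. m i = 0" using ms by blast
  then show ?thesis by (intro exI[of _ \<kappa>]) (simp add: m_def)
qed

lemma conf_circ:
  fixes u :: "'m::finite \<Rightarrow> real^'n"
  assumes cv: "circuit_vectors u c"
  shows "dep u l \<Longrightarrow> (\<exists>i. l i \<noteq> 0) \<Longrightarrow> \<exists>C \<kappa>. circuit u C \<and> \<kappa> \<noteq> 0 \<and>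
           (\<forall>i. \<kappa> * c C $ i \<noteq> 0 \<longrightarrow> sgn (\<kappa> * c C $ i) = sgn (l i))"
proof (induction "card {i. l i \<noteq> 0}" arbitrary: l rule: less_induct)
  case less
  define D where "D = {i. l i \<noteq> 0}"
  show ?case
  proof (cases "circuit u D")
    case True
    obtain \<kappa> where k: "\<forall>i. l i = \<kappa> * c C $ i" if "C = D" for C
      using one_dim[OF cv True less.prems(1)] by (auto simp: D_def)
    obtain \<kappa> where k: "\<forall>i. l i = \<kappa> * c D $ i"
      using one_dim[OF cv True less.prems(1)] by (auto simp: D_def)
    have "\<kappa> \<noteq> 0" using k less.prems(2) by auto
    then show ?thesis using True k by (intro exI[of _ D] exI[of _ \<kappa>]) simp
  next
    case False
    have "\<not> indep_family u D"
    proof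
      assume "indep_family u D"
      moreover have "(\<Sum>i\<in>D. l i *\<^sub>R u i) = 0" using dep_sub[OF less.prems(1)] by (simp add: D_def)
      ultimately have "\<forall>i\<in>D. l i = 0" by (simp add: indep_family_def)
      then show False using less.prems(2) by (auto simp: D_def)
    qed
    then obtain E where E: "E \<subset> D" "\<not> indep_family u E" using False by (auto simp: circuit_def)
    then obtain m0 j where m0: "(\<Sum>i\<in>E. m0 i *\<^sub>R u i) = 0" "j \<in> E" "m0 j \<noteq> 0"
      by (auto simp: indep_family_def)
    define m1 where "m1 i = (if i \<in> E then m0 i else 0)" for i
    have dm1: "dep u m1"
    proof -
      have "(\<Sum>i\<in>UNIV. m1 i *\<^sub>R u i) = (\<Sum>i\<in>E. m1 i *\<^sub>R u i)"
        by (rule sum.mono_neutral_right) (auto simp: m1_def)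
      also have "\<dots> = (\<Sum>i\<in>E. m0 i *\<^sub>R u i)"
        by (intro sum.cong) (auto simp: m1_def)
      finally have "(\<Sum>i\<in>UNIV. m1 i *\<^sub>R u i) = (\<Sum>i\<in>E. m0 i *\<^sub>R u i)" .
      then show ?thesis using m0(1) by (simp add: dep_def)
    qed
    have ljD: "l j \<noteq> 0" using E m0(2) by (auto simp: D_def)
    define m where "m i = (if 0 < l j * m1 j then m1 i else - m1 i)" for i
    have dm: "dep u m"
    proof (cases "0 < l j * m1 j")
      case True then have "m = m1" by (auto simp: m_def)
      then show ?thesis using dm1 by simp
    next
      case False then have "m = (\<lambda>i. (-1) * m1 i)" by (auto simp: m_def)
      then show ?thesis using dep_scale[OF dm1, of "-1"] by simp
    qed
    have mj: "0 < l j * m j"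
    proof -
      have "l j * m1 j \<noteq> 0" using ljD m0 by (simp add: m1_def)
      then have "0 < l j * m1 j \<or> l j * m1 j < 0" by linarith
      then show ?thesis by (auto simp: m_def)
    qed
    have msub: "\<forall>i. m i \<noteq> 0 \<longrightarrow> i \<in> E" by (auto simp: m_def m1_def)
    have sub: "\<forall>i. m i \<noteq> 0 \<longrightarrow> l i \<noteq> 0" using msub E by (auto simp: D_def)
    obtain t where t: "t > 0" "\<forall>i. l i - t * m i \<noteq> 0 \<longrightarrow> sgn (l i - t * m i) = sgn (l i)"
      "\<exists>k. l k \<noteq> 0 \<and> l k - t * m k = 0"
      using shrink[OF sub] mj by blast
    define l' where "l' i = l i - t * m i" for i
    have dl': "dep u l'" unfolding l'_def by (rule dep_diff[OF less.prems(1) dm])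
    obtain i0 where i0: "i0 \<in> D" "i0 \<notin> E" using E by blast
    have "l' i0 \<noteq> 0" using i0 msub by (auto simp: l'_def D_def)
    then have nz: "\<exists>i. l' i \<noteq> 0" by blast
    have s': "\<forall>i. l' i \<noteq> 0 \<longrightarrow> l i \<noteq> 0"
      using t(2) by (auto simp: l'_def sgn_0_0) 
    obtain k where "l k \<noteq> 0" "l' k = 0" using t(3) by (auto simp: l'_def)
    then have "card {i. l' i \<noteq> 0} < card {i. l i \<noteq> 0}" using card_supp_less s' by blast
    then obtain C \<kappa> where C: "circuit u C" "\<kappa> \<noteq> 0"
      "\<forall>i. \<kappa> * c C $ i \<noteq> 0 \<longrightarrow> sgn (\<kappa> * c C $ i) = sgn (l' i)"
      using less.hyps dl' nz by blast
    have "\<forall>i. \<kappa> * c C $ i \<noteq> 0 \<longrightarrow> sgn (\<kappa> * c C $ i) = sgn (l i)"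
    proof (intro allI impI)
      fix i assume h: "\<kappa> * c C $ i \<noteq> 0"
      then have e: "sgn (\<kappa> * c C $ i) = sgn (l' i)" using C(3) by blast
      then have "l' i \<noteq> 0" using h by (auto simp: sgn_0_0)
      then have "sgn (l' i) = sgn (l i)" using t(2) by (simp add: l'_def)
      then show "sgn (\<kappa> * c C $ i) = sgn (l i)" using e by simp
    qed
    then show ?thesis using C by blast
  qed
qed



lemma sgn_nonneg_transfer:
  fixes a b s :: real
  assumes "sgn a = sgn b" "0 \<le> b * s"
  shows "0 \<le> a * s"
proof -
  have "sgn (a * s) = sgn (b * s)" using assms(1) by (simp add: sgn_mult)
  moreover have "0 \<le> x \<longleftrightarrow> 0 \<le> sgn x" for x :: real by (simp add: sgn_if)
  ultimately show ?thesis using assms(2) by metis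
qed

lemma sgn_eq_pos:
  fixes a b :: real
  assumes "a \<noteq> 0" "sgn a = sgn b"
  shows "0 < a * b"
  using assms by (cases "a > 0") (auto simp: sgn_if split: if_splits intro: mult_neg_neg)

lemma cert_nz:
  assumes "cert u b s l" shows "\<exists>i. l i \<noteq> 0"
proof (rule ccontr)
  assume "\<not> ?thesis"
  then have "\<forall>i. l i = 0" by blast
  then show False using assms by (simp add: cert_def)
qed

lemma sgn_vals_real: "sgn (t::real) = -1 \<or> sgn t = 0 \<or> sgn t = 1"
  by (cases "t > 0"; cases "t < 0") auto

lemma circuit_ne: "circuit u C \<Longrightarrow> C \<noteq> {}"
  by (auto simp: circuit_def indep_family_def)

lemma cert_circ:
  fixes u :: "'m::finite \<Rightarrow> real^'n"
  assumes cv: "circuit_vectors u c"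
  shows "cert u b s l \<Longrightarrow> \<exists>C \<kappa>. circuit u C \<and> \<kappa> \<noteq> 0 \<and> cert u b s (\<lambda>i. \<kappa> * c C $ i)"
proof (induction "card {i. l i \<noteq> 0}" arbitrary: l rule: less_induct)
  case less
  have dl: "dep u l" and sl: "\<forall>i. s i \<noteq> 0 \<longrightarrow> 0 \<le> l i * s i" using less.prems by (auto simp: cert_def)
  obtain C \<kappa> where C: "circuit u C" "\<kappa> \<noteq> 0"
      "\<forall>i. \<kappa> * c C $ i \<noteq> 0 \<longrightarrow> sgn (\<kappa> * c C $ i) = sgn (l i)"
    using conf_circ[OF cv dl cert_nz[OF less.prems]] by blast
  define g where "g i = \<kappa> * c C $ i" for i
  show ?case
  proof (cases "cert u b s g")
    case True then show ?thesis using C unfolding g_def by blast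
  next
    case False
    have dg: "dep u g" unfolding g_def using dep_scale[OF circ_dep(1)[OF cv C(1)]] .
    have gsub: "\<forall>i. g i \<noteq> 0 \<longrightarrow> sgn (g i) = sgn (l i)" using C(3) by (simp add: g_def)
    have sg: "\<forall>i. s i \<noteq> 0 \<longrightarrow> 0 \<le> g i * s i"
    proof (intro allI impI)
      fix i assume "s i \<noteq> 0"
      then have h: "0 \<le> l i * s i" using sl by blast
      show "0 \<le> g i * s i"
      proof (cases "g i = 0")
        case False then show ?thesis using gsub h sgn_nonneg_transfer by blast
      qed simp
    qed
    have ng: "\<not> (0 < (\<Sum>i\<in>UNIV. g i * b$i))"
      "\<not> ((\<Sum>i\<in>UNIV. g i * b$i) = 0 \<and> (\<exists>i. s i \<noteq> 0 \<and> g i \<noteq> 0))"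
      using False dg sg by (auto simp: cert_def)
    have sub: "\<forall>i. g i \<noteq> 0 \<longrightarrow> l i \<noteq> 0" using gsub by (auto simp: sgn_0_0)
    obtain j where j: "j \<in> C" using circuit_ne[OF C(1)] by blast
    have gj: "g j \<noteq> 0" using circ_dep(2)[OF cv C(1), of j] j C(2) by (simp add: g_def)
    then have "0 < l j * g j" using gsub sgn_eq_pos[of "l j" "g j"] sub by (metis mult.commute)
    then have ne: "\<exists>i. 0 < l i * g i" by blast
    obtain t where t: "t > 0" "\<forall>i. l i - t * g i \<noteq> 0 \<longrightarrow> sgn (l i - t * g i) = sgn (l i)"
      "\<exists>k. l k \<noteq> 0 \<and> l k - t * g k = 0"
      using shrink[OF sub ne] by blast
    define l' where "l' i = l i - t * g i" for i
    have dl': "dep u l'" unfolding l'_def by (rule dep_diff[OF dl dg])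
    have sl': "\<forall>i. s i \<noteq> 0 \<longrightarrow> 0 \<le> l' i * s i"
    proof (intro allI impI)
      fix i assume "s i \<noteq> 0"
      then have h: "0 \<le> l i * s i" using sl by blast
      show "0 \<le> l' i * s i"
      proof (cases "l' i = 0")
        case False then have "sgn (l' i) = sgn (l i)" using t(2) by (simp add: l'_def)
        then show ?thesis using h sgn_nonneg_transfer by blast
      qed simp
    qed
    have sum': "(\<Sum>i\<in>UNIV. l' i * b$i) = (\<Sum>i\<in>UNIV. l i * b$i) - t * (\<Sum>i\<in>UNIV. g i * b$i)"
      by (simp add: l'_def left_diff_distrib sum_subtractf sum_distrib_left mult.assoc)
    have gle: "(\<Sum>i\<in>UNIV. g i * b$i) \<le> 0" using ng(1) by simp
    have third: "0 < (\<Sum>i\<in>UNIV. l' i * b$i) \<or> ((\<Sum>i\<in>UNIV. l' i * b$i) = 0 \<and> (\<exists>i. s i \<noteq> 0 \<and> l' i \<noteq> 0))"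
    proof -
      have tg: "t * (\<Sum>i\<in>UNIV. g i * b$i) \<le> 0" using t(1) gle by (simp add: mult_nonneg_nonpos)
      consider "0 < (\<Sum>i\<in>UNIV. l i * b$i)" | "(\<Sum>i\<in>UNIV. l i * b$i) = 0" "\<exists>i. s i \<noteq> 0 \<and> l i \<noteq> 0"
        using less.prems by (auto simp: cert_def)
      then show ?thesis
      proof cases
        case 1 then show ?thesis using sum' tg by simp
      next
        case 2
        show ?thesis
        proof (cases "(\<Sum>i\<in>UNIV. g i * b$i) = 0")
          case True
          then have "\<forall>i. s i \<noteq> 0 \<longrightarrow> g i = 0" using ng(2) by blast
          then have "\<forall>i. s i \<noteq> 0 \<longrightarrow> l' i = l i" by (simp add: l'_def)
          then show ?thesis using 2 sum' True by auto
        next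
          case False
          then have "t * (\<Sum>i\<in>UNIV. g i * b$i) < 0" using gle t(1) by (simp add: mult_pos_neg)
          then show ?thesis using 2 sum' by simp
        qed
      qed
    qed
    have cl': "cert u b s l'" using dl' sl' third by (simp add: cert_def)
    have s': "\<forall>i. l' i \<noteq> 0 \<longrightarrow> l i \<noteq> 0"
      using t(2) by (auto simp: l'_def sgn_0_0)
    obtain k where "l k \<noteq> 0" "l' k = 0" using t(3) by (auto simp: l'_def)
    then have "card {i. l' i \<noteq> 0} < card {i. l i \<noteq> 0}" using card_supp_less s' by blast
    then show ?thesis using less.hyps cl' by blast
  qed
qed

lemma sum_scaled_c:
  fixes v :: "real^'m"
  shows "(\<Sum>i\<in>UNIV. \<kappa> * w $ i * v$i) = \<kappa> * (w \<bullet> v)"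
  unfolding inner_vec_def by (simp add: sum_distrib_left mult.assoc)

lemma cert_transfer:
  assumes "sgn (c C \<bullet> a) = sgn (c C \<bullet> b)" "cert u b s (\<lambda>i. \<kappa> * c C $ i)"
  shows "cert u a s (\<lambda>i. \<kappa> * c C $ i)"
proof -
  have sa: "sgn (\<kappa> * (c C \<bullet> a)) = sgn (\<kappa> * (c C \<bullet> b))" using assms(1) by (simp add: sgn_mult)
  have p: "0 < x \<longleftrightarrow> sgn x = 1" and z: "x = 0 \<longleftrightarrow> sgn x = 0" for x :: real
    by (auto simp: sgn_if)
  have "0 < \<kappa> * (c C \<bullet> a) \<longleftrightarrow> 0 < \<kappa> * (c C \<bullet> b)" using sa p by metis
  moreover have "\<kappa> * (c C \<bullet> a) = 0 \<longleftrightarrow> \<kappa> * (c C \<bullet> b) = 0" using sa z by metis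
  ultimately show ?thesis using assms(2) unfolding cert_def sum_scaled_c by simp
qed

lemma cert_infeasible:
  fixes u :: "'m::finite \<Rightarrow> real^'n"
  assumes x: "(\<lambda>i. sgn (u i \<bullet> x - a$i)) = s" and c: "cert u a s l"
  shows False
proof -
  define f where "f i = u i \<bullet> x - a$i" for i
  have sf: "sgn (f i) = s i" for i using x by (metis f_def)
  have dl: "dep u l" and sl: "\<forall>i. s i \<noteq> 0 \<longrightarrow> 0 \<le> l i * s i" using c by (auto simp: cert_def)
  have "(\<Sum>i\<in>UNIV. l i * f i) = (\<Sum>i\<in>UNIV. l i *\<^sub>R u i) \<bullet> x - (\<Sum>i\<in>UNIV. l i * a$i)"
    by (simp add: f_def inner_sum_left right_diff_distrib sum_subtractf)
  then have eq: "(\<Sum>i\<in>UNIV. l i * f i) = - (\<Sum>i\<in>UNIV. l i * a$i)" using dl by (simp add: dep_def)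
  have nn: "0 \<le> l i * f i" for i
  proof (cases "s i = 0")
    case True then show ?thesis using sf[of i] by (simp add: sgn_0_0)
  next
    case False
    have "sgn (f i) = sgn (s i)" using sf[of i] by (metis sgn_sgn)
    then show ?thesis using sl False sgn_nonneg_transfer[of "f i" "s i" "l i"] by (simp add: mult.commute)
  qed
  have "0 \<le> (\<Sum>i\<in>UNIV. l i * f i)" using nn by (simp add: sum_nonneg)
  then have le: "(\<Sum>i\<in>UNIV. l i * a$i) \<le> 0" using eq by simp
  then obtain i where i: "s i \<noteq> 0" "l i \<noteq> 0" and e: "(\<Sum>i\<in>UNIV. l i * a$i) = 0"
    using c by (auto simp: cert_def)
  have "f i \<noteq> 0" using sf[of i] i by (auto simp: sgn_0_0)
  then have "0 < l i * f i" using nn[of i] i by (simp add: less_le)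
  then have "0 < (\<Sum>i\<in>UNIV. l i * f i)" using nn by (intro sum_pos2[of UNIV i]) auto
  then show False using eq e by simp
qed

lemma range_transfer:
  fixes u :: "'m::finite \<Rightarrow> real^'n"
  assumes cv: "circuit_vectors u c" and sg: "\<forall>C. circuit u C \<longrightarrow> sgn (c C \<bullet> a) = sgn (c C \<bullet> b)"
    and x: "(\<lambda>i. sgn (u i \<bullet> x - a$i)) = s"
  shows "\<exists>y. (\<lambda>i. sgn (u i \<bullet> y - b$i)) = s"
proof (rule ccontr)
  assume "\<not> ?thesis"
  then have nf: "\<forall>y. (\<lambda>i. sgn (u i \<bullet> y - b$i)) \<noteq> s" by blast
  have sv: "\<forall>i. s i = -1 \<or> s i = 0 \<or> s i = 1"
  proof
    fix i
    have "s i = sgn (u i \<bullet> x - a$i)" using x by auto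
    then show "s i = -1 \<or> s i = 0 \<or> s i = 1" using sgn_vals_real by metis
  qed
  obtain l where "cert u b s l" using motzkin[OF nf sv] by blast
  then obtain C \<kappa> where C: "circuit u C" "cert u b s (\<lambda>i. \<kappa> * c C $ i)" using cert_circ[OF cv] by blast
  then have "cert u a s (\<lambda>i. \<kappa> * c C $ i)" using cert_transfer[of c C a b u s \<kappa>] sg by blast
  then show False using cert_infeasible[OF x] by blast
qed



lemma sv_par: "sv (par_trans u a) x = (\<lambda>i. sgn (u i \<bullet> x - a$i))"
  by (simp add: sv_def par_trans_def)

lemma sv_coning: "sv (coning u a) p = (\<lambda>j. case j of None \<Rightarrow> sgn (snd p) | Some i \<Rightarrow> sgn (u i \<bullet> fst p + a$i * snd p))"
proof
  fix j show "sv (coning u a) p j = (case j of None \<Rightarrow> sgn (snd p) | Some i \<Rightarrow> sgn (u i \<bullet> fst p + a$i * snd p))"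
    by (cases j) (simp_all add: sv_def coning_def inner_prod_def)
qed

lemma sv_lift: "sv (elem_lift u a) p = (\<lambda>i. sgn (u i \<bullet> fst p + a$i * snd p))"
  by (simp add: sv_def elem_lift_def inner_prod_def)

lemma lift_transfer:
  fixes u :: "'m::finite \<Rightarrow> real^'n"
  assumes R: "range (sv (par_trans u a)) \<subseteq> range (sv (par_trans u b))"
  shows "\<exists>x' t'. sgn t' = sgn t \<and> (\<forall>i. sgn (u i \<bullet> x' + b$i * t') = sgn (u i \<bullet> x + a$i * t))"
proof (cases "t = 0")
  case True then show ?thesis by (intro exI[of _ x] exI[of _ 0]) simp
next
  case False
  define y where "y = (- 1 / t) *\<^sub>R x"
  have ea: "u i \<bullet> x + a$i * t = (- t) * (u i \<bullet> y - a$i)" for i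
    using False by (simp add: y_def algebra_simps)
  have "sv (par_trans u a) y \<in> range (sv (par_trans u b))" using R by blast
  then obtain z where z: "sv (par_trans u b) z = sv (par_trans u a) y" by auto
  then have zi: "sgn (u i \<bullet> z - b$i) = sgn (u i \<bullet> y - a$i)" for i
    unfolding sv_par by metis
  define t' where "t' = sgn t"
  define x' where "x' = (- t') *\<^sub>R z"
  have eb: "u i \<bullet> x' + b$i * t' = (- t') * (u i \<bullet> z - b$i)" for i
    by (simp add: x'_def algebra_simps)
  have "sgn (- t') = sgn (- t)" by (simp add: t'_def)
  then have "\<forall>i. sgn (u i \<bullet> x' + b$i * t') = sgn (u i \<bullet> x + a$i * t)"
    using zi by (simp add: ea eb sgn_mult)
  moreover have "sgn t' = sgn t" by (simp add: t'_def)
  ultimately show ?thesis by blast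
qed

lemma range_coning:
  fixes u :: "'m::finite \<Rightarrow> real^'n"
  assumes R: "range (sv (par_trans u a)) \<subseteq> range (sv (par_trans u b))"
  shows "range (sv (coning u a)) \<subseteq> range (sv (coning u b))"
proof
  fix s assume "s \<in> range (sv (coning u a))"
  then obtain p where p: "s = sv (coning u a) p" by auto
  obtain x' t' where xt: "sgn t' = sgn (snd p)" "\<forall>i. sgn (u i \<bullet> x' + b$i * t') = sgn (u i \<bullet> fst p + a$i * snd p)"
    using lift_transfer[OF R] by blast
  have "sv (coning u b) (x', t') = s"
  proof
    fix j show "sv (coning u b) (x', t') j = s j"
      unfolding p sv_coning using xt by (cases j) auto
  qed
  then show "s \<in> range (sv (coning u b))" by (metis rangeI)
qed

lemma range_lift:
  fixes u :: "'m::finite \<Rightarrow> real^'n"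
  assumes R: "range (sv (par_trans u a)) \<subseteq> range (sv (par_trans u b))"
  shows "range (sv (elem_lift u a)) \<subseteq> range (sv (elem_lift u b))"
proof
  fix s assume "s \<in> range (sv (elem_lift u a))"
  then obtain p where p: "s = sv (elem_lift u a) p" by auto
  obtain x' t' where xt: "\<forall>i. sgn (u i \<bullet> x' + b$i * t') = sgn (u i \<bullet> fst p + a$i * snd p)"
    using lift_transfer[OF R] by blast
  have "sv (elem_lift u b) (x', t') = s"
    unfolding p sv_lift using xt by auto
  then show "s \<in> range (sv (elem_lift u b))" by (metis rangeI)
qed

lemma range_par:
  fixes u :: "'m::finite \<Rightarrow> real^'n"
  assumes cv: "circuit_vectors u c" and sg: "\<forall>C. circuit u C \<longrightarrow> sgn (c C \<bullet> a) = sgn (c C \<bullet> b)"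
  shows "range (sv (par_trans u a)) \<subseteq> range (sv (par_trans u b))"
proof
  fix s assume "s \<in> range (sv (par_trans u a))"
  then obtain x where "(\<lambda>i. sgn (u i \<bullet> x - a$i)) = s" unfolding sv_par by auto
  then obtain y where "(\<lambda>i. sgn (u i \<bullet> y - b$i)) = s" using range_transfer[OF cv sg] by blast
  then show "s \<in> range (sv (par_trans u b))" unfolding sv_par by auto
qed

theorem theorem1p2:
  fixes u :: "'m::finite \<Rightarrow> real^'n"
    and c :: "'m set \<Rightarrow> real^'m"
    and F :: "(real^'m) set"
    and a b :: "real^'m"
  assumes nonzero: "\<forall>i. u i \<noteq> 0"
    and cvec: "circuit_vectors u c"
    and F: "F \<in> arr_faces {C. circuit u C} (derived_arr u c)"
    and relint: "\<exists>F0\<in>arr_open_faces {C. circuit u C} (derived_arr u c).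
                   closure F0 = F \<and> a \<in> F0 \<and> b \<in> F0"
  shows "normally_equiv_arr UNIV (par_trans u a) UNIV (par_trans u b)
       \<and> comb_equiv UNIV (par_trans u a) UNIV (par_trans u b)
       \<and> comb_equiv UNIV (coning u a) UNIV (coning u b)
       \<and> comb_equiv UNIV (elem_lift u a) UNIV (elem_lift u b)"
proof -
  obtain F0 where F0: "F0 \<in> arr_open_faces {C. circuit u C} (derived_arr u c)" "a \<in> F0" "b \<in> F0"
    using relint by blast
  then obtain z where z: "F0 = {y. sgnvec {C. circuit u C} (derived_arr u c) y = sgnvec {C. circuit u C} (derived_arr u c) z}"
    by (auto simp: arr_open_faces_def)
  have "sgnvec {C. circuit u C} (derived_arr u c) a = sgnvec {C. circuit u C} (derived_arr u c) b"
    using F0(2,3) z by simp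
  then have sg: "\<forall>C. circuit u C \<longrightarrow> sgn (c C \<bullet> a) = sgn (c C \<bullet> b)"
  proof (intro allI impI)
    fix C assume eq: "sgnvec {C. circuit u C} (derived_arr u c) a = sgnvec {C. circuit u C} (derived_arr u c) b"
      and C: "circuit u C"
    have "sgnvec {C. circuit u C} (derived_arr u c) a C = sgnvec {C. circuit u C} (derived_arr u c) b C"
      using eq by simp
    then show "sgn (c C \<bullet> a) = sgn (c C \<bullet> b)" using C by (simp add: sgnvec_def derived_arr_def)
  qed
  then have sg': "\<forall>C. circuit u C \<longrightarrow> sgn (c C \<bullet> b) = sgn (c C \<bullet> a)" by simp
  have Rp: "range (sv (par_trans u a)) = range (sv (par_trans u b))"
    using range_par[OF cvec sg] range_par[OF cvec sg'] by blast
  have Rc: "range (sv (coning u a)) = range (sv (coning u b))"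
    using range_coning[of u a b] range_coning[of u b a] Rp by blast
  have Rl: "range (sv (elem_lift u a)) = range (sv (elem_lift u b))"
    using range_lift[of u a b] range_lift[of u b a] Rp by blast
  obtain \<Psi> where \<Psi>: "bij_betw \<Psi> (arr_faces UNIV (par_trans u a)) (arr_faces UNIV (par_trans u b))"
    "\<forall>F\<in>arr_faces UNIV (par_trans u a). \<forall>G\<in>arr_faces UNIV (par_trans u a). F \<subseteq> G \<longleftrightarrow> \<Psi> F \<subseteq> \<Psi> G"
    "\<forall>\<sigma>\<in>range (sv (par_trans u a)). \<Psi> (cf (par_trans u a) \<sigma>) = cf (par_trans u b) \<sigma>"
    using comb_generic[OF Rp] by blast
  have fan: "\<forall>F\<in>arr_faces UNIV (par_trans u a). normal_fan F = normal_fan (\<Psi> F)"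
  proof
    fix F assume "F \<in> arr_faces UNIV (par_trans u a)"
    then obtain \<sigma> where s: "\<sigma> \<in> range (sv (par_trans u a))" "F = cf (par_trans u a) \<sigma>"
      by (auto simp: arr_faces_eq)
    have fe: "(\<lambda>i. fst (par_trans u a i)) = (\<lambda>i. fst (par_trans u b i))" by (simp add: par_trans_def)
    show "normal_fan F = normal_fan (\<Psi> F)"
    proof -
      have "\<Psi> F = cf (par_trans u b) \<sigma>" using s \<Psi>(3) by blast
      then show ?thesis
        using s(2) normal_fan_cf[of "par_trans u a" \<sigma>] normal_fan_cf[of "par_trans u b" \<sigma>] Rp fe by simp
    qed
  qed
  have ne: "normally_equiv_arr UNIV (par_trans u a) UNIV (par_trans u b)"
    unfolding normally_equiv_arr_def using \<Psi>(1,2) fan by blast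
  have c1: "comb_equiv UNIV (par_trans u a) UNIV (par_trans u b)"
    unfolding comb_equiv_def using \<Psi>(1,2) by blast
  have c2: "comb_equiv UNIV (coning u a) UNIV (coning u b)"
    unfolding comb_equiv_def using comb_generic[OF Rc] by blast
  have c3: "comb_equiv UNIV (elem_lift u a) UNIV (elem_lift u b)"
    unfolding comb_equiv_def using comb_generic[OF Rl] by blast
  show ?thesis using ne c1 c2 c3 by blast
qed

end
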